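(* Let $M,N$ be finitary matroids on $E$, $b=(B_M,B_N)$ with $B_M$ a base of $M$ and $B_N$ a base of $N$, let $P$ be a finite directed path without shortcuts in $D(b)$, let $(B_M',B_N'):=b\circ P$, and let $U$ be the union of the escorting circuits of the arcs of $P$. Then $D_M(B_M')[E\setminus U]=D_M(B_M)[E\setminus U]$ and $D_N(B_N')[E\setminus U]=D_N(B_N)[E\setminus U]$.
   Context: For a base $B$ of a matroid $M$ on $E$, $D_M(B)$ is the digraph on $E$ with $ef\in D_M(B)$ iff $e\in E\setminus B$ and $f\in C_M(e,B)\setminus\{e\}$ ($C_M(e,B)$ the fundamental circuit of $e$ on $B$). $D^{-1}$ reverses all arcs; $D(b):=D_M(B_M)\cup D_N^{-1}(B_N)$. Escorting circuits of an arc $ef\in D(b)$: $C_M(e,B_M)$ if $ef\in D_M(B_M)$, and $C_N(f,B_N)$ if $ef\in D_N^{-1}(B_N)$. A shortcut of a path $P$ is an arc $ef\in D(b)$ with $e,f\in E(P)$, $f$ later than $e$ on $P$, $ef\notin A(P)$. $b\circ P=(B_M',B_N')$ where $B_M'$ is obtained from $B_M$ by adding tails and deleting heads of arcs in $A(P)\cap D_M(B_M)$, and $B_N'$ from $B_N$ by adding heads and deleting tails of arcs in $A(P)\cap D_N^{-1}(B_N)$ (these are bases). $D[X]$ denotes the subdigraph induced on $X$. *)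

theory Defs
  imports Main
begin

text \<open>A matroid on a (possibly infinite) ground set E, given by its set of
independent sets, following the axioms (I1), (I2), (I3), (IM) of
Bruhn, Diestel, Kriesell, Pendavingh and Wollan; finitary means that a set is
independent as soon as all its finite subsets are.\<close>

definition mbase :: "'a set \<Rightarrow> 'a set set \<Rightarrow> 'a set \<Rightarrow> bool" where
  "mbase E \<I> B \<longleftrightarrow> B \<in> \<I> \<and> (\<forall>X\<in>\<I>. B \<subseteq> X \<longrightarrow> X = B)"

definition matroid :: "'a set \<Rightarrow> 'a set set \<Rightarrow> bool" where
  "matroid E \<I> \<longleftrightarrow>
     (\<forall>X\<in>\<I>. X \<subseteq> E) \<and>
     {} \<in> \<I> \<and>
     (\<forall>X Y. X \<in> \<I> \<longrightarrow> Y \<subseteq> X \<longrightarrow> Y \<in> \<I>) \<and>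
     (\<forall>X Y. X \<in> \<I> \<longrightarrow> \<not> mbase E \<I> X \<longrightarrow> mbase E \<I> Y \<longrightarrow>
            (\<exists>x\<in>Y - X. insert x X \<in> \<I>)) \<and>
     (\<forall>X Y. X \<in> \<I> \<longrightarrow> X \<subseteq> Y \<longrightarrow> Y \<subseteq> E \<longrightarrow>
            (\<exists>Z. Z \<in> \<I> \<and> X \<subseteq> Z \<and> Z \<subseteq> Y \<and>
                 (\<forall>W\<in>\<I>. Z \<subseteq> W \<longrightarrow> W \<subseteq> Y \<longrightarrow> W = Z)))"

definition finitary_matroid :: "'a set \<Rightarrow> 'a set set \<Rightarrow> bool" where
  "finitary_matroid E \<I> \<longleftrightarrow> matroid E \<I> \<and>
     (\<forall>X. X \<subseteq> E \<longrightarrow> (\<forall>F. F \<subseteq> X \<longrightarrow> finite F \<longrightarrow> F \<in> \<I>) \<longrightarrow> X \<in> \<I>)"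

definition mcircuit :: "'a set \<Rightarrow> 'a set set \<Rightarrow> 'a set \<Rightarrow> bool" where
  "mcircuit E \<I> C \<longleftrightarrow> C \<subseteq> E \<and> C \<notin> \<I> \<and> (\<forall>D. D \<subset> C \<longrightarrow> D \<in> \<I>)"

definition fcirc :: "'a set \<Rightarrow> 'a set set \<Rightarrow> 'a \<Rightarrow> 'a set \<Rightarrow> 'a set" where
  "fcirc E \<I> e B = (THE C. mcircuit E \<I> C \<and> C \<subseteq> insert e B)"

definition exdig :: "'a set \<Rightarrow> 'a set set \<Rightarrow> 'a set \<Rightarrow> ('a \<times> 'a) set" where
  "exdig E \<I> B = {(e, f). e \<in> E - B \<and> f \<in> fcirc E \<I> e B - {e}}"

definition Db :: "'a set \<Rightarrow> 'a set set \<Rightarrow> 'a set set \<Rightarrow> 'a set \<Rightarrow> 'a set \<Rightarrow> ('a \<times> 'a) set" where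
  "Db E IM IN BM BN = exdig E IM BM \<union> (exdig E IN BN)\<inverse>"

definition path_arcs :: "'a list \<Rightarrow> ('a \<times> 'a) set" where
  "path_arcs P = set (zip P (tl P))"

definition dpath :: "('a \<times> 'a) set \<Rightarrow> 'a list \<Rightarrow> bool" where
  "dpath D P \<longleftrightarrow> P \<noteq> [] \<and> distinct P \<and> path_arcs P \<subseteq> D"

definition no_shortcuts :: "('a \<times> 'a) set \<Rightarrow> 'a list \<Rightarrow> bool" where
  "no_shortcuts D P \<longleftrightarrow>
     (\<forall>i j. i < j \<longrightarrow> j < length P \<longrightarrow> (P ! i, P ! j) \<in> D \<longrightarrow> (P ! i, P ! j) \<in> path_arcs P)"

definition newBM :: "'a set \<Rightarrow> 'a set set \<Rightarrow> 'a set \<Rightarrow> 'a list \<Rightarrow> 'a set" where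
  "newBM E IM BM P =
     (BM \<union> fst ` (path_arcs P \<inter> exdig E IM BM)) - snd ` (path_arcs P \<inter> exdig E IM BM)"

definition newBN :: "'a set \<Rightarrow> 'a set set \<Rightarrow> 'a set \<Rightarrow> 'a list \<Rightarrow> 'a set" where
  "newBN E IN BN P =
     (BN \<union> snd ` (path_arcs P \<inter> (exdig E IN BN)\<inverse>)) - fst ` (path_arcs P \<inter> (exdig E IN BN)\<inverse>)"

definition escort_union :: "'a set \<Rightarrow> 'a set set \<Rightarrow> 'a set set \<Rightarrow> 'a set \<Rightarrow> 'a set \<Rightarrow> 'a list \<Rightarrow> 'a set" where
  "escort_union E IM IN BM BN P =
     (\<Union>(e, f)\<in>path_arcs P \<inter> exdig E IM BM. fcirc E IM e BM) \<union>
     (\<Union>(e, f)\<in>path_arcs P \<inter> (exdig E IN BN)\<inverse>. fcirc E IN f BN)"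

definition induced :: "('a \<times> 'a) set \<Rightarrow> 'a set \<Rightarrow> ('a \<times> 'a) set" where
  "induced D X = D \<inter> (X \<times> X)"

end

theory Submission
  imports Defs
begin

lemma mat_facts:
  assumes "finitary_matroid E I"
  shows "\<And>X. X \<in> I \<Longrightarrow> X \<subseteq> E"
    and "\<And>X Y. X \<in> I \<Longrightarrow> Y \<subseteq> X \<Longrightarrow> Y \<in> I"
    and "\<And>X Y. X \<in> I \<Longrightarrow> \<not> mbase E I X \<Longrightarrow> mbase E I Y \<Longrightarrow> \<exists>x\<in>Y - X. insert x X \<in> I"
    and "\<And>X Y. X \<in> I \<Longrightarrow> X \<subseteq> Y \<Longrightarrow> Y \<subseteq> E \<Longrightarrow>
            (\<exists>Z. Z \<in> I \<and> X \<subseteq> Z \<and> Z \<subseteq> Y \<and> (\<forall>W\<in>I. Z \<subseteq> W \<longrightarrow> W \<subseteq> Y \<longrightarrow> W = Z))"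
    and "\<And>X. X \<subseteq> E \<Longrightarrow> (\<forall>F. F \<subseteq> X \<longrightarrow> finite F \<longrightarrow> F \<in> I) \<Longrightarrow> X \<in> I"
proof -
  have m: "matroid E I" and f: "\<forall>X. X \<subseteq> E \<longrightarrow> (\<forall>F. F \<subseteq> X \<longrightarrow> finite F \<longrightarrow> F \<in> I) \<longrightarrow> X \<in> I"
    using assms unfolding finitary_matroid_def by simp_all
  note mm = m[unfolded matroid_def]
  have a1: "\<forall>X\<in>I. X \<subseteq> E" using mm by (elim conjE)
  have a3: "\<forall>X Y. X \<in> I \<longrightarrow> Y \<subseteq> X \<longrightarrow> Y \<in> I" using mm by (elim conjE)
  have a4: "\<forall>X Y. X \<in> I \<longrightarrow> \<not> mbase E I X \<longrightarrow> mbase E I Y \<longrightarrow>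
            (\<exists>x\<in>Y - X. insert x X \<in> I)" using mm by (elim conjE)
  have a5: "\<forall>X Y. X \<in> I \<longrightarrow> X \<subseteq> Y \<longrightarrow> Y \<subseteq> E \<longrightarrow>
            (\<exists>Z. Z \<in> I \<and> X \<subseteq> Z \<and> Z \<subseteq> Y \<and>
                 (\<forall>W\<in>I. Z \<subseteq> W \<longrightarrow> W \<subseteq> Y \<longrightarrow> W = Z))" using mm by (elim conjE)
  show "\<And>X. X \<in> I \<Longrightarrow> X \<subseteq> E" using a1 by blast
  show "\<And>X Y. X \<in> I \<Longrightarrow> Y \<subseteq> X \<Longrightarrow> Y \<in> I" using a3 by blast
  show "\<And>X Y. X \<in> I \<Longrightarrow> \<not> mbase E I X \<Longrightarrow> mbase E I Y \<Longrightarrow> \<exists>x\<in>Y - X. insert x X \<in> I" using a4 by blast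
  show "\<And>X Y. X \<in> I \<Longrightarrow> X \<subseteq> Y \<Longrightarrow> Y \<subseteq> E \<Longrightarrow>
            (\<exists>Z. Z \<in> I \<and> X \<subseteq> Z \<and> Z \<subseteq> Y \<and> (\<forall>W\<in>I. Z \<subseteq> W \<longrightarrow> W \<subseteq> Y \<longrightarrow> W = Z))" using a5 by blast
  show "\<And>X. X \<subseteq> E \<Longrightarrow> (\<forall>F. F \<subseteq> X \<longrightarrow> finite F \<longrightarrow> F \<in> I) \<Longrightarrow> X \<in> I" using f by blast
qed

lemma min_dep:
  assumes "finite F" "F \<notin> I"
  shows "\<exists>C\<subseteq>F. C \<notin> I \<and> (\<forall>D. D \<subset> C \<longrightarrow> D \<in> I)"
  using assms
proof (induction "card F" arbitrary: F rule: less_induct)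
  case less
  show ?case
  proof (cases "\<forall>D. D \<subset> F \<longrightarrow> D \<in> I")
    case True then show ?thesis using less.prems(2) by (intro exI[of _ F]) simp
  next
    case False
    then obtain D where D: "D \<subset> F" "D \<notin> I" by blast
    have c: "card D < card F" using D(1) less.prems(1) by (simp add: psubset_card_mono)
    have fD: "finite D" using D(1) less.prems(1) by (meson finite_subset psubset_imp_subset)
    obtain C where "C \<subseteq> D" "C \<notin> I" "\<forall>D. D \<subset> C \<longrightarrow> D \<in> I" using less.hyps[OF c fD D(2)] by (elim exE conjE)
    then show ?thesis using D(1) by (intro exI[of _ C]) auto
  qed
qed

lemma dep_circuit:
  assumes fm: "finitary_matroid E I" and XE: "X \<subseteq> E" and XI: "X \<notin> I"
  shows "\<exists>C\<subseteq>X. mcircuit E I C"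
proof -
  have "\<not> (\<forall>F. F \<subseteq> X \<longrightarrow> finite F \<longrightarrow> F \<in> I)" using mat_facts(5)[OF fm XE] XI by metis
  then obtain F where F: "F \<subseteq> X" "finite F" "F \<notin> I" by auto
  obtain C where C: "C \<subseteq> F" "C \<notin> I" "\<forall>D. D \<subset> C \<longrightarrow> D \<in> I" using min_dep[OF F(2,3)] by (elim exE conjE)
  have "C \<subseteq> X" using C(1) F(1) by (rule order_trans)
  moreover have "mcircuit E I C" unfolding mcircuit_def using C \<open>C \<subseteq> X\<close> XE by auto
  ultimately show ?thesis by auto
qed

lemma lemA_base:
  assumes fm: "finitary_matroid E I" and B: "mbase E I B" and f: "f \<in> B" and e: "e \<in> E"
    and C: "mcircuit E I C" "f \<in> C" "C \<subseteq> insert e B"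
  shows "insert e (B - {f}) \<in> I"
proof -
  have BI: "B \<in> I" using B unfolding mbase_def by blast
  have CI: "C \<notin> I" and Cm: "\<And>D. D \<subset> C \<Longrightarrow> D \<in> I" using C unfolding mcircuit_def by blast+
  have "e \<notin> B" using C CI BI mat_facts(2)[OF fm] by (metis insert_absorb)
  define Y where "Y = insert e (B - {f})"
  have YE: "Y \<subseteq> E" using Y_def e mat_facts(1)[OF fm BI] by blast
  have XI: "C - {f} \<in> I" using Cm C(2) by blast
  have XY: "C - {f} \<subseteq> Y" using C(3) Y_def by blast
  obtain Z where Z: "Z \<in> I" "C - {f} \<subseteq> Z" "Z \<subseteq> Y" "\<forall>W\<in>I. Z \<subseteq> W \<longrightarrow> W \<subseteq> Y \<longrightarrow> W = Z"
    using mat_facts(4)[OF fm XI XY YE] by blast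
  have Zb: "mbase E I Z"
  proof (rule ccontr)
    assume "\<not> mbase E I Z"
    then obtain x where x: "x \<in> B - Z" "insert x Z \<in> I" using mat_facts(3)[OF fm Z(1) _ B] by blast
    show False
    proof (cases "x = f")
      case True
      then have "C \<subseteq> insert x Z" using Z(2) by blast
      then show False using x(2) CI mat_facts(2)[OF fm] by blast
    next
      case False
      then have "insert x Z \<subseteq> Y" using x Z(3) Y_def by blast
      then have "insert x Z = Z" using Z(4) x(2) by blast
      then show False using x(1) by blast
    qed
  qed
  have BfI: "B - {f} \<in> I" using BI mat_facts(2)[OF fm] by blast
  have "\<not> mbase E I (B - {f})" using B f BI unfolding mbase_def by blast
  then obtain x where x: "x \<in> Z - (B - {f})" "insert x (B - {f}) \<in> I"
    using mat_facts(3)[OF fm BfI _ Zb] by blast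
  then have "x = e" using Z(3) Y_def by blast
  then show ?thesis using x(2) by simp
qed

lemma lemA:
  assumes fm: "finitary_matroid E I" and T: "T \<in> I" and f: "f \<in> T" and e: "e \<in> E"
    and C: "mcircuit E I C" "f \<in> C" "C \<subseteq> insert e T"
  shows "insert e (T - {f}) \<in> I"
proof -
  have TE: "T \<subseteq> E" using mat_facts(1)[OF fm T] .
  obtain Z where Z: "Z \<in> I" "T \<subseteq> Z" "Z \<subseteq> E" "\<forall>W\<in>I. Z \<subseteq> W \<longrightarrow> W \<subseteq> E \<longrightarrow> W = Z"
    using mat_facts(4)[OF fm T TE] by blast
  have Zb: "mbase E I Z" unfolding mbase_def using Z mat_facts(1)[OF fm] by blast
  have "insert e (Z - {f}) \<in> I" using lemA_base[OF fm Zb _ e C(1,2)] f Z(2) C(3) by blast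
  moreover have "insert e (T - {f}) \<subseteq> insert e (Z - {f})" using Z(2) by blast
  ultimately show ?thesis using mat_facts(2)[OF fm] by blast
qed

lemma circ_unique:
  assumes fm: "finitary_matroid E I" and T: "T \<in> I" and e: "e \<in> E"
    and C1: "mcircuit E I C1" "C1 \<subseteq> insert e T"
    and C2: "mcircuit E I C2" "C2 \<subseteq> insert e T"
  shows "C1 = C2"
proof (rule ccontr)
  assume ne: "C1 \<noteq> C2"
  have C1I: "C1 \<notin> I" and C2I: "C2 \<notin> I" and C2m: "\<And>D. D \<subset> C2 \<Longrightarrow> D \<in> I"
    using C1(1) C2(1) unfolding mcircuit_def by auto
  have "\<not> C1 \<subseteq> C2"
  proof
    assume "C1 \<subseteq> C2"
    then have "C1 \<subset> C2" using ne by auto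
    then show False using C2m C1I by auto
  qed
  then obtain f where f: "f \<in> C1" "f \<notin> C2" by auto
  have "e \<in> C2"
  proof (rule ccontr)
    assume "e \<notin> C2"
    then have "C2 \<subseteq> T" using C2(2) by auto
    then show False using C2I T mat_facts(2)[OF fm] by metis
  qed
  then have "f \<in> T" using f C1(2) by auto
  then have "insert e (T - {f}) \<in> I" using lemA[OF fm T _ e C1(1) f(1) C1(2)] by simp
  moreover have "C2 \<subseteq> insert e (T - {f})" using C2(2) f(2) by auto
  ultimately show False using C2I mat_facts(2)[OF fm] by metis
qed

lemma circ_dep: "mcircuit E I C \<Longrightarrow> C \<notin> I"
  unfolding mcircuit_def by simp

lemma not_indep_sup:
  assumes fm: "finitary_matroid E I" and "mcircuit E I C" "C \<subseteq> X"
  shows "X \<notin> I"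
  using assms circ_dep mat_facts(2)[OF fm] by metis

lemma fcirc_props:
  assumes fm: "finitary_matroid E I" and B: "mbase E I B" and e: "e \<in> E" "e \<notin> B"
  shows "mcircuit E I (fcirc E I e B)" "fcirc E I e B \<subseteq> insert e B" "e \<in> fcirc E I e B"
proof -
  have BI: "B \<in> I" using B unfolding mbase_def by simp
  have "insert e B \<notin> I"
  proof
    assume "insert e B \<in> I"
    then have "insert e B = B" using B unfolding mbase_def by auto
    then show False using e(2) by auto
  qed
  moreover have "insert e B \<subseteq> E" using e mat_facts(1)[OF fm BI] by auto
  ultimately obtain C where C: "C \<subseteq> insert e B" "mcircuit E I C" using dep_circuit[OF fm] by metis
  have eq: "fcirc E I e B = C" unfolding fcirc_def
  proof (rule the_equality)
    show "mcircuit E I C \<and> C \<subseteq> insert e B" using C by simp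
    show "\<And>C'. mcircuit E I C' \<and> C' \<subseteq> insert e B \<Longrightarrow> C' = C"
      using C circ_unique[OF fm BI e(1)] by metis
  qed
  show "mcircuit E I (fcirc E I e B)" "fcirc E I e B \<subseteq> insert e B" using eq C by auto
  show "e \<in> fcirc E I e B"
  proof (rule ccontr)
    assume "e \<notin> fcirc E I e B"
    then have "C \<subseteq> B" using C eq by auto
    then show False using C BI not_indep_sup[OF fm] by metis
  qed
qed

lemma fcirc_eq:
  assumes fm: "finitary_matroid E I" and B: "mbase E I B" and e: "e \<in> E" "e \<notin> B"
    and C: "mcircuit E I C" "C \<subseteq> insert e B"
  shows "fcirc E I e B = C"
proof -
  have BI: "B \<in> I" using B unfolding mbase_def by simp
  show ?thesis using circ_unique[OF fm BI e(1) fcirc_props(1,2)[OF fm B e] C] .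
qed

lemma exdig_char:
  assumes fm: "finitary_matroid E I" and B: "mbase E I B"
  shows "(e, x) \<in> exdig E I B \<longleftrightarrow> e \<in> E \<and> e \<notin> B \<and> x \<in> B \<and> insert e (B - {x}) \<in> I"
proof
  have BI: "B \<in> I" using B unfolding mbase_def by simp
  {
    assume "(e, x) \<in> exdig E I B"
    then have e: "e \<in> E" "e \<notin> B" and x: "x \<in> fcirc E I e B" "x \<noteq> e" unfolding exdig_def by auto
    have xB: "x \<in> B" using fcirc_props(2)[OF fm B e] x by auto
    show "e \<in> E \<and> e \<notin> B \<and> x \<in> B \<and> insert e (B - {x}) \<in> I"
      using lemA[OF fm BI xB e(1) fcirc_props(1)[OF fm B e] x(1) fcirc_props(2)[OF fm B e]] e xB by simp
  }
  {
    assume h: "e \<in> E \<and> e \<notin> B \<and> x \<in> B \<and> insert e (B - {x}) \<in> I"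
    then have e: "e \<in> E" "e \<notin> B" by auto
    have "x \<in> fcirc E I e B"
    proof (rule ccontr)
      assume "x \<notin> fcirc E I e B"
      then have "fcirc E I e B \<subseteq> insert e (B - {x})" using fcirc_props(2)[OF fm B e] by auto
      then show False using h fcirc_props(1)[OF fm B e] not_indep_sup[OF fm] by metis
    qed
    then show "(e, x) \<in> exdig E I B" unfolding exdig_def using h by auto
  }
qed

lemma exch_base:
  assumes fm: "finitary_matroid E I" and B: "mbase E I B" and e: "e \<in> E" "e \<notin> B"
    and f: "f \<in> B" "f \<in> fcirc E I e B"
  shows "mbase E I (insert e (B - {f}))"
proof (rule ccontr)
  have BI: "B \<in> I" using B unfolding mbase_def by simp
  have I: "insert e (B - {f}) \<in> I"
    using lemA[OF fm BI f(1) e(1) fcirc_props(1)[OF fm B e] f(2) fcirc_props(2)[OF fm B e]] .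
  assume "\<not> mbase E I (insert e (B - {f}))"
  then obtain x where x: "x \<in> B - insert e (B - {f})" "insert x (insert e (B - {f})) \<in> I"
    using mat_facts(3)[OF fm I _ B] by metis
  then have "x = f" by auto
  then have "fcirc E I e B \<subseteq> insert x (insert e (B - {f}))" using fcirc_props(2)[OF fm B e] by auto
  then show False using x(2) fcirc_props(1)[OF fm B e] not_indep_sup[OF fm] by metis
qed

lemma parallel:
  assumes fm: "finitary_matroid E I" and C: "mcircuit E I C" "C \<subseteq> insert f (insert g S)" "f \<in> C" "g \<in> C"
    and "g \<in> E" "e \<noteq> f" "f \<notin> S" "insert f (insert e S) \<in> I"
  shows "insert g (insert e S) \<in> I"
proof -
  have "insert g (insert f (insert e S) - {f}) \<in> I"
    by (rule lemA[OF fm assms(9) _ assms(6) C(1) C(3)]) (use C(2) in auto)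
  moreover have "insert f (insert e S) - {f} = insert e S" using assms(7,8) by auto
  ultimately show ?thesis by simp
qed

definition cnd :: "'a set \<Rightarrow> 'a set set \<Rightarrow> 'a set \<Rightarrow> 'a \<times> 'a \<Rightarrow> bool" where
  "cnd E I B a \<longleftrightarrow> fst a \<in> E \<and> fst a \<notin> B \<and> snd a \<in> B \<and> snd a \<in> fcirc E I (fst a) B"

fun good :: "'a set \<Rightarrow> 'a set set \<Rightarrow> 'a set \<Rightarrow> ('a \<times> 'a) list \<Rightarrow> bool" where
  "good E I B [] = True"
| "good E I B (a # L) = (cnd E I B a \<and>
     (\<forall>b\<in>set L. snd b \<notin> fcirc E I (fst a) B \<and> fst b \<noteq> fst a \<and> snd b \<noteq> snd a) \<and> good E I B L)"

definition newB :: "'a set \<Rightarrow> ('a \<times> 'a) list \<Rightarrow> 'a set" where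
  "newB B L = (B \<union> fst ` set L) - snd ` set L"

definition UL :: "'a set \<Rightarrow> 'a set set \<Rightarrow> 'a set \<Rightarrow> ('a \<times> 'a) list \<Rightarrow> 'a set" where
  "UL E I B L = (\<Union>b\<in>set L. fcirc E I (fst b) B)"

lemma good_cnd: "good E I B L \<Longrightarrow> b \<in> set L \<Longrightarrow> cnd E I B b"
  by (induction L) auto

lemma good_snoc: "good E I B (L @ [a]) \<longleftrightarrow> good E I B L \<and> cnd E I B a \<and>
   (\<forall>b\<in>set L. snd a \<notin> fcirc E I (fst b) B \<and> fst a \<noteq> fst b \<and> snd a \<noteq> snd b)"
  by (induction L) auto

lemma gen:
  assumes fm: "finitary_matroid E I" and B: "mbase E I B" and g: "good E I B L"
  shows "mbase E I (newB B L) \<and> (\<forall>y. y \<notin> UL E I B L \<longrightarrow> (y \<in> newB B L \<longleftrightarrow> y \<in> B)) \<and>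
    (\<forall>e x. e \<in> E \<longrightarrow> e \<notin> B \<longrightarrow> x \<in> B \<longrightarrow> e \<notin> UL E I B L \<longrightarrow> x \<notin> UL E I B L \<longrightarrow>
       (insert e (newB B L - {x}) \<in> I \<longleftrightarrow> insert e (B - {x}) \<in> I))"
  using g
proof (induction L)
  case Nil
  then show ?case using B unfolding newB_def UL_def by simp
next
  case (Cons a L)
  obtain e f where a: "a = (e, f)" by (cases a)
  have gL: "good E I B L" using Cons.prems by simp
  have ca: "e \<in> E" "e \<notin> B" "f \<in> B" "f \<in> fcirc E I e B" using Cons.prems a by (auto simp: cnd_def)
  have rest: "\<And>b. b \<in> set L \<Longrightarrow> snd b \<notin> fcirc E I e B \<and> fst b \<noteq> e \<and> snd b \<noteq> f"
    using Cons.prems a by auto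
  have restB: "\<And>b. b \<in> set L \<Longrightarrow> snd b \<in> B" using good_cnd[OF gL] unfolding cnd_def by auto
  define B2 where "B2 = newB B L"
  have IH: "mbase E I B2" "\<And>y. y \<notin> UL E I B L \<Longrightarrow> (y \<in> B2 \<longleftrightarrow> y \<in> B)"
    "\<And>e x. e \<in> E \<Longrightarrow> e \<notin> B \<Longrightarrow> x \<in> B \<Longrightarrow> e \<notin> UL E I B L \<Longrightarrow> x \<notin> UL E I B L \<Longrightarrow>
       (insert e (B2 - {x}) \<in> I \<longleftrightarrow> insert e (B - {x}) \<in> I)"
    using Cons.IH[OF gL] unfolding B2_def by auto
  have eB2: "e \<notin> B2" using ca(2) rest unfolding B2_def newB_def by force
  have fB2: "f \<in> B2" using ca(3) rest unfolding B2_def newB_def by force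
  have Csub: "fcirc E I e B \<subseteq> insert e B2"
  proof
    fix y assume y: "y \<in> fcirc E I e B"
    then have "y \<in> insert e B" using fcirc_props(2)[OF fm B ca(1,2)] by auto
    moreover have "y \<notin> snd ` set L" using y rest by force
    ultimately show "y \<in> insert e B2" unfolding B2_def newB_def by auto
  qed
  have ceq: "fcirc E I e B2 = fcirc E I e B"
    using fcirc_eq[OF fm IH(1) ca(1) eB2 fcirc_props(1)[OF fm B ca(1,2)] Csub] .
  have eS: "e \<notin> snd ` set L" using restB ca(2) by force
  have nb: "newB B (a # L) = insert e (B2 - {f})"
    using eS ca unfolding a B2_def newB_def by auto
  have UL: "UL E I B (a # L) = fcirc E I e B \<union> UL E I B L" unfolding UL_def a by simp
  have eC: "e \<in> fcirc E I e B" using fcirc_props(3)[OF fm B ca(1,2)] .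
  show ?case
  proof (intro conjI allI impI)
    show "mbase E I (newB B (a # L))" unfolding nb
      using exch_base[OF fm IH(1) ca(1) eB2 fB2] ca(4) ceq by simp
  next
    fix y assume y: "y \<notin> UL E I B (a # L)"
    then have "y \<noteq> e" "y \<noteq> f" "y \<notin> UL E I B L" using eC ca(4) UL by auto
    then show "y \<in> newB B (a # L) \<longleftrightarrow> y \<in> B" unfolding nb using IH(2) by auto
  next
    fix e0 x assume h: "e0 \<in> E" "e0 \<notin> B" "x \<in> B" "e0 \<notin> UL E I B (a # L)" "x \<notin> UL E I B (a # L)"
    then have h2: "e0 \<notin> UL E I B L" "x \<notin> UL E I B L" "e0 \<notin> fcirc E I e B" "x \<notin> fcirc E I e B"
      using UL by auto
    have xe: "x \<noteq> e" "x \<noteq> f" "e0 \<noteq> e" "e0 \<noteq> f" using h2 eC ca(4) by auto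
    define S where "S = B2 - {f, x}"
    have n1: "newB B (a # L) - {x} = insert e S" unfolding nb S_def using xe by auto
    have n2: "B2 - {x} = insert f S" unfolding S_def using fB2 xe by auto
    have CS: "fcirc E I e B \<subseteq> insert f (insert e S)" using Csub h2(4) unfolding S_def by auto
    have fE: "f \<in> E" using ca(3) B mat_facts(1)[OF fm] unfolding mbase_def by auto
    have fS: "f \<notin> S" "e \<notin> S" unfolding S_def using eB2 by auto
    have CS': "fcirc E I e B \<subseteq> insert e (insert f S)" using CS by auto
    have "insert e0 (insert e S) \<in> I \<longleftrightarrow> insert e0 (insert f S) \<in> I"
    proof
      assume "insert e0 (insert e S) \<in> I"
      then have "insert e (insert e0 S) \<in> I" by (simp add: insert_commute)
      then have "insert f (insert e0 S) \<in> I"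
        using parallel[OF fm fcirc_props(1)[OF fm B ca(1,2)] CS' eC ca(4) fE xe(3) fS(2)] by simp
      then show "insert e0 (insert f S) \<in> I" by (simp add: insert_commute)
    next
      assume "insert e0 (insert f S) \<in> I"
      then have "insert f (insert e0 S) \<in> I" by (simp add: insert_commute)
      then have "insert e (insert e0 S) \<in> I"
        using parallel[OF fm fcirc_props(1)[OF fm B ca(1,2)] CS ca(4) eC ca(1) xe(4) fS(1)] by simp
      then show "insert e0 (insert e S) \<in> I" by (simp add: insert_commute)
    qed
    also have "\<dots> \<longleftrightarrow> insert e0 (B - {x}) \<in> I" using IH(3)[OF h(1-3) h2(1,2)] n2 by simp
    finally show "insert e0 (newB B (a # L) - {x}) \<in> I \<longleftrightarrow> insert e0 (B - {x}) \<in> I"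
      using n1 by simp
  qed
qed

fun arcsOf :: "('a \<times> 'a) set \<Rightarrow> 'a list \<Rightarrow> ('a \<times> 'a) list" where
  "arcsOf R (x # y # zs) = (if (x, y) \<in> R then [(x, y)] else []) @ arcsOf R (y # zs)"
| "arcsOf R _ = []"

lemma path_arcs_cons2: "path_arcs (x # y # zs) = insert (x, y) (path_arcs (y # zs))"
  unfolding path_arcs_def by simp

lemma set_arcsOf: "set (arcsOf R P) = path_arcs P \<inter> R"
  by (induction R P rule: arcsOf.induct) (auto simp: path_arcs_cons2 path_arcs_def)

lemma arcs_mem: "b \<in> set (arcsOf R P) \<Longrightarrow> fst b \<in> set P \<and> snd b \<in> set (tl P)"
  unfolding set_arcsOf path_arcs_def by (cases b) (auto dest: set_zip_leftD set_zip_rightD)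

lemma ns_cons:
  assumes ns: "no_shortcuts D (x # P)" and d: "distinct (x # P)"
  shows "(\<forall>z\<in>set P. (x, z) \<in> D \<longrightarrow> z = hd P) \<and> no_shortcuts D P"
proof (intro conjI ballI impI)
  fix z assume z: "z \<in> set P" "(x, z) \<in> D"
  then obtain j where j: "j < length P" "P ! j = z" by (auto simp: in_set_conv_nth)
  have "((x # P) ! 0, (x # P) ! Suc j) \<in> path_arcs (x # P)"
    using ns j z(2) unfolding no_shortcuts_def by (metis Suc_less_eq length_Cons nth_Cons_0 nth_Cons_Suc zero_less_Suc)
  then have "(x, z) \<in> set (zip (x # P) P)" using j unfolding path_arcs_def by simp
  moreover have "P \<noteq> []" using z by auto
  ultimately have "(x, z) = (x, hd P) \<or> (x, z) \<in> set (zip P (tl P))"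
    by (cases P) auto
  moreover have "(x, z) \<notin> set (zip P (tl P))" using d by (auto dest: set_zip_leftD)
  ultimately show "z = hd P" by auto
next
  show "no_shortcuts D P" unfolding no_shortcuts_def
  proof (intro allI impI)
    fix i j assume ij: "i < j" "j < length P" "(P ! i, P ! j) \<in> D"
    then have "((x # P) ! Suc i, (x # P) ! Suc j) \<in> path_arcs (x # P)"
      using ns unfolding no_shortcuts_def by (metis Suc_less_eq length_Cons nth_Cons_Suc)
    then have "(P ! i, P ! j) \<in> set (zip (x # P) P)" unfolding path_arcs_def by simp
    moreover have "P ! i \<noteq> x" using d ij by auto
    ultimately show "(P ! i, P ! j) \<in> path_arcs P" unfolding path_arcs_def
      by (cases P) auto
  qed
qed

lemma goodM:
  assumes fm: "finitary_matroid E I" and B: "mbase E I B"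
    and "distinct P" "no_shortcuts D P" "exdig E I B \<subseteq> D"
  shows "good E I B (arcsOf (exdig E I B) P)"
  using assms(3,4)
proof (induction "exdig E I B" P rule: arcsOf.induct)
  case (1 x y zs)
  have ns: "\<forall>z\<in>set (y # zs). (x, z) \<in> D \<longrightarrow> z = y" and ns2: "no_shortcuts D (y # zs)"
    using ns_cons[OF "1.prems"(2,1)] by auto
  have IH: "good E I B (arcsOf (exdig E I B) (y # zs))" using 1 ns2 by auto
  show ?case
  proof (cases "(x, y) \<in> exdig E I B")
    case False then show ?thesis using IH by simp
  next
    case True
    have xy: "x \<in> E" "x \<notin> B" "y \<in> B" "y \<in> fcirc E I x B"
      using True exdig_char[OF fm B] unfolding exdig_def by auto
    have "\<forall>b\<in>set (arcsOf (exdig E I B) (y # zs)). snd b \<notin> fcirc E I x B \<and> fst b \<noteq> x \<and> snd b \<noteq> y"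
    proof
      fix b assume b: "b \<in> set (arcsOf (exdig E I B) (y # zs))"
      then have bm: "fst b \<in> set (y # zs)" "snd b \<in> set zs" using arcs_mem[OF b] by auto
      have d: "x \<notin> set (y # zs)" "y \<notin> set zs" using "1.prems"(1) by auto
      have "snd b \<notin> fcirc E I x B"
      proof
        assume "snd b \<in> fcirc E I x B"
        then have "(x, snd b) \<in> exdig E I B" using xy d bm unfolding exdig_def by auto
        then have "snd b = y" using ns assms(5) bm by auto
        then show False using d bm by auto
      qed
      then show "snd b \<notin> fcirc E I x B \<and> fst b \<noteq> x \<and> snd b \<noteq> y" using d bm by auto
    qed
    then show ?thesis using True IH xy by (simp add: cnd_def)
  qed
qed auto

lemma goodN:
  assumes fm: "finitary_matroid E I" and B: "mbase E I B"
    and "distinct P" "no_shortcuts D P" "(exdig E I B)\<inverse> \<subseteq> D"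
  shows "good E I B (rev (map prod.swap (arcsOf ((exdig E I B)\<inverse>) P)))"
  using assms(3,4)
proof (induction "(exdig E I B)\<inverse>" P rule: arcsOf.induct)
  case (1 x y zs)
  have ns: "\<forall>z\<in>set (y # zs). (x, z) \<in> D \<longrightarrow> z = y" and ns2: "no_shortcuts D (y # zs)"
    using ns_cons[OF "1.prems"(2,1)] by auto
  have IH: "good E I B (rev (map prod.swap (arcsOf ((exdig E I B)\<inverse>) (y # zs))))" using 1 ns2 by auto
  show ?case
  proof (cases "(x, y) \<in> (exdig E I B)\<inverse>")
    case False then show ?thesis using IH by simp
  next
    case True
    have xy: "y \<in> E" "y \<notin> B" "x \<in> B" "x \<in> fcirc E I y B"
      using True exdig_char[OF fm B] unfolding exdig_def by auto
    have "\<forall>b\<in>set (rev (map prod.swap (arcsOf ((exdig E I B)\<inverse>) (y # zs)))).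
        x \<notin> fcirc E I (fst b) B \<and> y \<noteq> fst b \<and> x \<noteq> snd b"
    proof
      fix b assume "b \<in> set (rev (map prod.swap (arcsOf ((exdig E I B)\<inverse>) (y # zs))))"
      then obtain c where c: "c \<in> set (arcsOf ((exdig E I B)\<inverse>) (y # zs))" "b = prod.swap c" by auto
      then have bm: "snd b \<in> set (y # zs)" "fst b \<in> set zs" using arcs_mem[OF c(1)] by auto
      have cR: "(fst b, snd b) \<in> exdig E I B" using c unfolding set_arcsOf by (cases c) auto
      then have fbE: "fst b \<in> E" "fst b \<notin> B" unfolding exdig_def by auto
      have d: "x \<notin> set (y # zs)" "y \<notin> set zs" using "1.prems"(1) by auto
      have "x \<notin> fcirc E I (fst b) B"
      proof
        assume "x \<in> fcirc E I (fst b) B"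
        then have "(fst b, x) \<in> exdig E I B" using fbE d bm unfolding exdig_def by auto
        then have "fst b = y" using ns assms(5) bm by auto
        then show False using d bm by auto
      qed
      then show "x \<notin> fcirc E I (fst b) B \<and> y \<noteq> fst b \<and> x \<noteq> snd b" using d bm by auto
    qed
    then show ?thesis using True IH xy by (simp add: cnd_def good_snoc)
  qed
qed auto

lemma part:
  assumes fm: "finitary_matroid E I" and B: "mbase E I B" and g: "good E I B L"
    and U: "UL E I B L \<subseteq> U"
  shows "induced (exdig E I (newB B L)) (E - U) = induced (exdig E I B) (E - U)"
proof -
  note G = gen[OF fm B g]
  have B2: "mbase E I (newB B L)" using G by simp
  have G2: "\<And>y. y \<notin> U \<Longrightarrow> (y \<in> newB B L \<longleftrightarrow> y \<in> B)" using G U by auto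
  have G3: "\<And>e x. e \<in> E \<Longrightarrow> e \<notin> B \<Longrightarrow> x \<in> B \<Longrightarrow> e \<notin> U \<Longrightarrow> x \<notin> U \<Longrightarrow>
       (insert e (newB B L - {x}) \<in> I \<longleftrightarrow> insert e (B - {x}) \<in> I)"
  proof -
    fix e x assume "e \<in> E" "e \<notin> B" "x \<in> B" "e \<notin> U" "x \<notin> U"
    moreover have "e \<notin> UL E I B L" "x \<notin> UL E I B L" using U \<open>e \<notin> U\<close> \<open>x \<notin> U\<close> by auto
    ultimately show "insert e (newB B L - {x}) \<in> I \<longleftrightarrow> insert e (B - {x}) \<in> I"
      using G by simp
  qed
  have key: "\<And>e x. e \<notin> U \<Longrightarrow> x \<notin> U \<Longrightarrow> (e, x) \<in> exdig E I (newB B L) \<longleftrightarrow> (e, x) \<in> exdig E I B"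
  proof -
    fix e x assume h: "e \<notin> U" "x \<notin> U"
    have "(e, x) \<in> exdig E I (newB B L) \<longleftrightarrow> e \<in> E \<and> e \<notin> newB B L \<and> x \<in> newB B L \<and> insert e (newB B L - {x}) \<in> I"
      by (rule exdig_char[OF fm B2])
    also have "\<dots> \<longleftrightarrow> e \<in> E \<and> e \<notin> B \<and> x \<in> B \<and> insert e (newB B L - {x}) \<in> I"
      using G2[OF h(1)] G2[OF h(2)] by simp
    also have "\<dots> \<longleftrightarrow> e \<in> E \<and> e \<notin> B \<and> x \<in> B \<and> insert e (B - {x}) \<in> I"
      using G3 h by auto
    also have "\<dots> \<longleftrightarrow> (e, x) \<in> exdig E I B" by (rule exdig_char[OF fm B, symmetric])
    finally show "(e, x) \<in> exdig E I (newB B L) \<longleftrightarrow> (e, x) \<in> exdig E I B" .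
  qed
  show ?thesis unfolding induced_def
  proof (rule set_eqI)
    fix p :: "'a \<times> 'a"
    obtain e x where p: "p = (e, x)" by (cases p)
    show "p \<in> exdig E I (newB B L) \<inter> (E - U) \<times> (E - U) \<longleftrightarrow> p \<in> exdig E I B \<inter> (E - U) \<times> (E - U)"
      unfolding p using key[of e x] by auto
  qed
qed

theorem claim3p6:
  fixes E :: "'a set" and IM IN :: "'a set set" and BM BN :: "'a set" and P :: "'a list"
  assumes "finitary_matroid E IM" and "finitary_matroid E IN"
    and "mbase E IM BM" and "mbase E IN BN"
    and "dpath (Db E IM IN BM BN) P"
    and "no_shortcuts (Db E IM IN BM BN) P"
  shows "induced (exdig E IM (newBM E IM BM P)) (E - escort_union E IM IN BM BN P)
           = induced (exdig E IM BM) (E - escort_union E IM IN BM BN P)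
       \<and> induced (exdig E IN (newBN E IN BN P)) (E - escort_union E IM IN BM BN P)
           = induced (exdig E IN BN) (E - escort_union E IM IN BM BN P)"
proof -
  define LM where "LM = arcsOf (exdig E IM BM) P"
  define LN where "LN = rev (map prod.swap (arcsOf ((exdig E IN BN)\<inverse>) P))"
  have d: "distinct P" using assms(5) unfolding dpath_def by simp
  have gM: "good E IM BM LM" unfolding LM_def
    by (rule goodM[OF assms(1,3) d assms(6)]) (simp add: Db_def)
  have gN: "good E IN BN LN" unfolding LN_def
    by (rule goodN[OF assms(2,4) d assms(6)]) (simp add: Db_def)
  have sM: "set LM = path_arcs P \<inter> exdig E IM BM" unfolding LM_def set_arcsOf ..
  have sN: "set LN = prod.swap ` (path_arcs P \<inter> (exdig E IN BN)\<inverse>)" unfolding LN_def by (simp add: set_arcsOf)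
  have nM: "newBM E IM BM P = newB BM LM" unfolding newBM_def newB_def sM ..
  have nN: "newBN E IN BN P = newB BN LN" unfolding newBN_def newB_def sN
    by (simp add: image_comp)
  have uM: "UL E IM BM LM \<subseteq> escort_union E IM IN BM BN P"
  proof -
    have "UL E IM BM LM = (\<Union>(e, f)\<in>path_arcs P \<inter> exdig E IM BM. fcirc E IM e BM)"
      unfolding UL_def sM by (simp add: split_def)
    then show ?thesis unfolding escort_union_def by (rule ssubst) (rule Un_upper1)
  qed
  have uN: "UL E IN BN LN \<subseteq> escort_union E IM IN BM BN P"
  proof -
    have "UL E IN BN LN = (\<Union>(e, f)\<in>path_arcs P \<inter> (exdig E IN BN)\<inverse>. fcirc E IN f BN)"
      unfolding UL_def sN by (simp add: split_def image_comp)
    then show ?thesis unfolding escort_union_def by (rule ssubst) (rule Un_upper2)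
  qed
  show ?thesis unfolding nM nN
    using part[OF assms(1,3) gM uM] part[OF assms(2,4) gN uN] by simp
qed

end
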